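(* Let $X$ be an absolutely continuous nonnegative random variable with finite moment of order $s+1$, where $s\geq 1$ is an integer. Then the variance of the $s$-iterated distribution induced by $X$ is $$\sigma^2_s=\frac{1}{s}\frac{\mathbb{E}X^s}{\mathbb{E}X^{s-1}}\left(\frac{2}{s+1}\frac{\mathbb{E}X^{s+1}}{\mathbb{E}X^s}-\frac{1}{s}\frac{\mathbb{E}X^s}{\mathbb{E}X^{s-1}}\right).$$
   Context: Let $X$ be a nonnegative absolutely continuous random variable with density $f_X$. Set $\overline{T}_{X,0}(x)=f_X(x)$ and $\mu_{X,0}=1$. For each integer $s\geq 1$ define recursively $\overline{T}_{X,s}(x)=\frac{1}{\mu_{X,s-1}}\int_x^\infty \overline{T}_{X,s-1}(t)\,dt$ for $x\geq 0$, and $\mu_{X,s}=\int_0^\infty \overline{T}_{X,s}(t)\,dt$ (assuming these integrals are finite). The function $\overline{T}_{X,s}$ is the tail (survival function) of a distribution on $[0,\infty)$, called the $s$-iterated distribution induced by $X$. *)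

theory Defs
  imports "HOL-Probability.Probability"
begin

text \<open>Iterated tails and their means, defined jointly by primitive recursion on s:
  component 1 is the function T_{X,s}, component 2 is mu_{X,s}.\<close>

primrec iter_data :: "(real \<Rightarrow> real) \<Rightarrow> nat \<Rightarrow> (real \<Rightarrow> real) \<times> real" where
  "iter_data f 0 = (f, 1)"
| "iter_data f (Suc s) =
     (let T = fst (iter_data f s); m = snd (iter_data f s);
          T' = (\<lambda>x. (1 / m) * (LINT t:{x..}|lborel. T t))
      in (T', LINT t:{0..}|lborel. T' t))"

definition iter_tail :: "(real \<Rightarrow> real) \<Rightarrow> nat \<Rightarrow> real \<Rightarrow> real" where
  "iter_tail f s = fst (iter_data f s)"

definition iter_mean :: "(real \<Rightarrow> real) \<Rightarrow> nat \<Rightarrow> real" where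
  "iter_mean f s = snd (iter_data f s)"

end

theory Submission
  imports Defs
begin
definition hh :: "nat \<Rightarrow> real \<Rightarrow> real \<Rightarrow> real" where
  "hh k t y = (if t \<le> y then (y - t)^k else 0)"

lemma hh_nonneg: "hh k t y \<ge> 0" by (simp add: hh_def)
lemma hh_meas[measurable]: "(\<lambda>(t,y). hh k t y) \<in> borel_measurable (lborel \<Otimes>\<^sub>M lborel)"
  unfolding hh_def by measurable

lemma inner1: "(\<integral>\<^sup>+ t. ennreal (indicator {x..} t * hh k t y) \<partial>lborel) = ennreal (hh (Suc k) x y / real (Suc k))"
proof (cases "x \<le> y")
  case False
  then have "(\<lambda>t. ennreal (indicator {x..} t * hh k t y)) = (\<lambda>t. 0)"
    by (auto simp: hh_def indicator_def)
  then show ?thesis using False by (simp add: hh_def)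
next
  case True
  have eq: "\<And>t. ennreal (indicator {x..} t * hh k t y) = ennreal ((y - t)^k) * indicator {x..y} t"
    by (auto simp: hh_def indicator_def)
  have "(\<integral>\<^sup>+ t. ennreal ((y - t)^k) * indicator {x..y} t \<partial>lborel)
     = ennreal ((\<lambda>t. 0 - (y - t) ^ Suc k / real (Suc k)) y - (\<lambda>t. 0 - (y - t) ^ Suc k / real (Suc k)) x)"
    apply (rule nn_integral_FTC_Icc)
    apply measurable
    apply (rule derivative_eq_intros refl | simp)+
    apply (simp add: True)
    done
  moreover have "(\<integral>\<^sup>+ t. ennreal (indicator {x..} t * hh k t y) \<partial>lborel) = (\<integral>\<^sup>+ t. ennreal ((y - t)^k) * indicator {x..y} t \<partial>lborel)"
    by (rule nn_integral_cong) (rule eq)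
  ultimately show ?thesis using True by (simp add: hh_def)
qed

lemma inner2: "(\<integral>\<^sup>+ t. ennreal (indicator {0..} t * t * hh k t y) \<partial>lborel)
   = ennreal (hh (Suc (Suc k)) 0 y / (real (Suc k) * real (Suc (Suc k))))"
proof (cases "0 \<le> y")
  case False
  then have "(\<lambda>t. ennreal (indicator {0..} t * t * hh k t y)) = (\<lambda>t. 0)"
    by (auto simp: hh_def indicator_def)
  then show ?thesis using False by (simp add: hh_def)
next
  case True
  have eq: "\<And>t. ennreal (indicator {0..} t * t * hh k t y) = ennreal (t * (y - t)^k) * indicator {0..y} t"
    by (auto simp: hh_def indicator_def)
  have "(\<integral>\<^sup>+ t. ennreal (t * (y - t)^k) * indicator {0..y} t \<partial>lborel)
     = ennreal ((\<lambda>t. 0 - t * (y - t) ^ Suc k / real (Suc k) - (y - t) ^ Suc (Suc k) / (real (Suc k) * real (Suc (Suc k)))) y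
         - (\<lambda>t. 0 - t * (y - t) ^ Suc k / real (Suc k) - (y - t) ^ Suc (Suc k) / (real (Suc k) * real (Suc (Suc k)))) 0)"
    apply (rule nn_integral_FTC_Icc)
    apply measurable
    apply (rule derivative_eq_intros refl | simp)+
    subgoal for t
      apply (rule trans[of _ "t * (y - t) ^ k"])
      defer apply simp
      apply (simp only: diff_divide_distrib[symmetric])
      apply (subgoal_tac "1 + real k \<noteq> 0")
      apply simp
      apply linarith
      done
    apply auto[1]
    apply (simp add: True)
    done
  moreover have "(\<integral>\<^sup>+ t. ennreal (indicator {0..} t * t * hh k t y) \<partial>lborel) = (\<integral>\<^sup>+ t. ennreal (t * (y - t)^k) * indicator {0..y} t \<partial>lborel)"
    by (rule nn_integral_cong) (rule eq)
  ultimately show ?thesis using True by (simp add: hh_def)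
qed

lemma innerN:
  fixes q Q :: "real \<Rightarrow> real"
  assumes [measurable]: "q \<in> borel_measurable borel" and "\<And>t. 0 \<le> t \<Longrightarrow> 0 \<le> q t"
    and "\<And>t. 0 \<le> t \<Longrightarrow> DERIV Q t :> q t" and "0 \<le> x"
  shows "(\<integral>\<^sup>+ t. ennreal (indicator {0..} t * q t * (if t < x then 1 else 0)) \<partial>lborel) = ennreal (Q x - Q 0)"
proof -
  have "(\<integral>\<^sup>+ t. ennreal (indicator {0..} t * q t * (if t < x then 1 else 0)) \<partial>lborel)
      = (\<integral>\<^sup>+ t. ennreal (q t) * indicator {0..x} t \<partial>lborel)"
    apply (rule nn_integral_cong_AE)
    using AE_lborel_singleton[of x]
    apply eventually_elim
    apply (auto simp: indicator_def)
    done
  also have "\<dots> = ennreal (Q x - Q 0)"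
    by (rule nn_integral_FTC_Icc) (use assms in auto)
  finally show ?thesis .
qed

definition GG :: "(real \<Rightarrow> real) \<Rightarrow> nat \<Rightarrow> real \<Rightarrow> ennreal" where
  "GG f k x = (\<integral>\<^sup>+ y. ennreal (f y * hh k x y) \<partial>lborel)"

lemma swapG:
  fixes f q :: "real \<Rightarrow> real"
  assumes [measurable]: "f \<in> borel_measurable lborel" "q \<in> borel_measurable lborel"
    and f0: "\<And>y. 0 \<le> f y" and q0: "\<And>t. 0 \<le> q t"
  shows "(\<integral>\<^sup>+ t. ennreal (q t) * GG f k t \<partial>lborel)
    = (\<integral>\<^sup>+ y. ennreal (f y) * (\<integral>\<^sup>+ t. ennreal (q t * hh k t y) \<partial>lborel) \<partial>lborel)"
proof -
  have "(\<integral>\<^sup>+ t. ennreal (q t) * GG f k t \<partial>lborel)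
      = (\<integral>\<^sup>+ t. (\<integral>\<^sup>+ y. ennreal (f y * (q t * hh k t y)) \<partial>lborel) \<partial>lborel)"
    unfolding GG_def
    apply (rule nn_integral_cong)
    apply (subst nn_integral_cmult[symmetric])
    apply measurable
    apply (rule nn_integral_cong)
    apply (simp add: ennreal_mult'[symmetric] f0 q0 hh_nonneg mult.commute mult.left_commute)
    done
  also have "\<dots> = (\<integral>\<^sup>+ y. (\<integral>\<^sup>+ t. ennreal (f y * (q t * hh k t y)) \<partial>lborel) \<partial>lborel)"
    by (rule lborel_pair.Fubini'[symmetric]) measurable
  also have "\<dots> = (\<integral>\<^sup>+ y. ennreal (f y) * (\<integral>\<^sup>+ t. ennreal (q t * hh k t y) \<partial>lborel) \<partial>lborel)"
    apply (rule nn_integral_cong)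
    apply (subst nn_integral_cmult[symmetric])
    apply measurable
    apply (rule nn_integral_cong)
    apply (simp add: ennreal_mult'[symmetric] f0 q0 hh_nonneg)
    done
  finally show ?thesis .
qed

lemma swapN:
  fixes q :: "real \<Rightarrow> real" and N :: "real measure"
  assumes [measurable]: "q \<in> borel_measurable lborel"
    and N: "prob_space N" "sets N = sets borel"
  shows "(\<integral>\<^sup>+ x. (\<integral>\<^sup>+ t. ennreal (indicator {0..} t * q t * (if t < x then 1 else 0)) \<partial>lborel) \<partial>N)
    = (\<integral>\<^sup>+ t. ennreal (indicator {0..} t * q t) * emeasure N {t<..} \<partial>lborel)"
proof -
  interpret N: prob_space N by fact
  interpret P: pair_sigma_finite lborel N
    by (intro pair_sigma_finite.intro lborel.sigma_finite_measure_axioms N.sigma_finite_measure_axioms)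
  have mN[measurable_cong]: "sets N = sets borel" by fact
  have "(\<integral>\<^sup>+ x. (\<integral>\<^sup>+ t. ennreal (indicator {0..} t * q t * (if t < x then 1 else 0)) \<partial>lborel) \<partial>N)
     = (\<integral>\<^sup>+ t. (\<integral>\<^sup>+ x. ennreal (indicator {0..} t * q t * (if t < x then 1 else 0)) \<partial>N) \<partial>lborel)"
    by (rule P.Fubini') measurable
  also have "\<dots> = (\<integral>\<^sup>+ t. ennreal (indicator {0..} t * q t) * emeasure N {t<..} \<partial>lborel)"
    apply (rule nn_integral_cong)
    apply (subst nn_integral_cmult_indicator[symmetric])
    apply (simp add: mN)
    apply (rule nn_integral_cong)
    apply (auto simp: indicator_def)
    done
  finally show ?thesis .
qed


lemma GG_meas[measurable]:
  assumes [measurable]: "f \<in> borel_measurable lborel"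
  shows "GG f k \<in> borel_measurable lborel"
proof -
  have "(\<lambda>x. \<integral>\<^sup>+ y. ennreal (f y * hh k x y) \<partial>lborel) \<in> borel_measurable lborel"
    by measurable
  then show ?thesis unfolding GG_def[abs_def] .
qed


lemma tail1:
  assumes [measurable]: "f \<in> borel_measurable lborel" and f0: "\<And>y. 0 \<le> f y"
  shows "(\<integral>\<^sup>+ t. ennreal (indicator {x..} t) * GG f j t \<partial>lborel) = GG f (Suc j) x * ennreal (1 / real (Suc j))"
proof -
  have "(\<integral>\<^sup>+ t. ennreal (indicator {x..} t) * GG f j t \<partial>lborel)
       = (\<integral>\<^sup>+ y. ennreal (f y) * ennreal (hh (Suc j) x y / real (Suc j)) \<partial>lborel)"
    by (subst swapG) (auto simp: f0 inner1)
  also have "\<dots> = (\<integral>\<^sup>+ y. ennreal (f y * hh (Suc j) x y) * ennreal (1 / real (Suc j)) \<partial>lborel)"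
    by (rule nn_integral_cong) (simp add: ennreal_mult[symmetric] f0 hh_nonneg)
  also have "\<dots> = GG f (Suc j) x * ennreal (1 / real (Suc j))"
    unfolding GG_def by (rule nn_integral_multc) measurable
  finally show ?thesis .
qed

lemma tail2:
  assumes [measurable]: "f \<in> borel_measurable lborel" and f0: "\<And>y. 0 \<le> f y"
  shows "(\<integral>\<^sup>+ t. ennreal (indicator {0..} t * t) * GG f j t \<partial>lborel)
     = GG f (Suc (Suc j)) 0 * ennreal (1 / (real (Suc j) * real (Suc (Suc j))))"
proof -
  have "(\<integral>\<^sup>+ t. ennreal (indicator {0..} t * t) * GG f j t \<partial>lborel)
       = (\<integral>\<^sup>+ y. ennreal (f y) * ennreal (hh (Suc (Suc j)) 0 y / (real (Suc j) * real (Suc (Suc j)))) \<partial>lborel)"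
    apply (subst swapG)
    apply (simp_all add: f0 inner2)
    apply (simp add: indicator_def)
    done
  also have "\<dots> = (\<integral>\<^sup>+ y. ennreal (f y * hh (Suc (Suc j)) 0 y) * ennreal (1 / (real (Suc j) * real (Suc (Suc j)))) \<partial>lborel)"
    by (rule nn_integral_cong) (simp add: ennreal_mult[symmetric] f0 hh_nonneg)
  also have "\<dots> = GG f (Suc (Suc j)) 0 * ennreal (1 / (real (Suc j) * real (Suc (Suc j))))"
    unfolding GG_def by (rule nn_integral_multc) measurable
  finally show ?thesis .
qed

lemma ennreal_mult3: "0 \<le> x \<Longrightarrow> 0 \<le> y \<Longrightarrow> 0 \<le> z \<Longrightarrow> ennreal x * ennreal y * ennreal z = ennreal (x * y * z)"
  by (simp add: ennreal_mult)

lemma alg_final: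
  fixes A0 A1 A2 S T :: real
  assumes "A0 > 0" "A1 > 0" "A2 > 0" "S > 0" "T > 0"
  shows "A2 * (1 / (S * T)) * (2 / A0) - (A1 * (1 / S) * (1 / A0))\<^sup>2
    = (1 / S) * (A1 / A0) * ((2 / T) * (A2 / A1) - (1 / S) * (A1 / A0))"
  using assms by (simp add: field_simps power2_eq_square)

theorem corollary1:
  fixes M :: "'a measure" and X :: "'a \<Rightarrow> real" and f :: "real \<Rightarrow> real"
    and s :: nat and N :: "real measure"
  assumes "prob_space M"
    and "f \<in> borel_measurable lborel"
    and "\<And>x. f x \<ge> 0"
    and "distributed M lborel X (\<lambda>x. ennreal (f x))"
    and "\<And>\<omega>. \<omega> \<in> space M \<Longrightarrow> X \<omega> \<ge> 0"
    and "s \<ge> 1"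
    and "integrable M (\<lambda>\<omega>. X \<omega> ^ (s + 1))"
    \<comment> \<open>N is the s-iterated distribution induced by X: a probability distribution
        on [0,oo) whose tail is T_{X,s}\<close>
    and "prob_space N" and "sets N = sets borel"
    and "measure N {..<0} = 0"
    and "\<And>x. x \<ge> 0 \<Longrightarrow> measure N {x<..} = iter_tail f s x"
  shows "prob_space.variance N (\<lambda>x. x) =
    (1 / real s) * ((LINT \<omega>|M. X \<omega> ^ s) / (LINT \<omega>|M. X \<omega> ^ (s - 1))) *
    ((2 / real (s + 1)) * ((LINT \<omega>|M. X \<omega> ^ (s + 1)) / (LINT \<omega>|M. X \<omega> ^ s))
     - (1 / real s) * ((LINT \<omega>|M. X \<omega> ^ s) / (LINT \<omega>|M. X \<omega> ^ (s - 1))))"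
proof -
  interpret M: prob_space M by fact
  note fm[measurable] = assms(2)
  have f0: "\<And>x. 0 \<le> f x" by fact
  have X0: "\<And>\<omega>. \<omega> \<in> space M \<Longrightarrow> 0 \<le> X \<omega>" by fact
  have Xm[measurable]: "X \<in> measurable M lborel" and D: "distr M lborel X = density lborel f"
    using assms(4) by (auto simp: distributed_def)
  have Xb[measurable]: "X \<in> borel_measurable M" using Xm by simp
  define a where "a k = (LINT \<omega>|M. X \<omega> ^ k)" for k
  have GG0: "GG f k 0 = (\<integral>\<^sup>+ \<omega>. ennreal (X \<omega> ^ k) \<partial>M)" for k
  proof -
    have "GG f k 0 = (\<integral>\<^sup>+ y. ennreal (f y) * ennreal (hh k 0 y) \<partial>lborel)"
      unfolding GG_def by (rule nn_integral_cong) (simp add: ennreal_mult f0 hh_nonneg)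
    also have "\<dots> = (\<integral>\<^sup>+ y. ennreal (hh k 0 y) \<partial>density lborel f)"
      by (rule nn_integral_density[symmetric]) (auto simp: hh_def)
    also have "\<dots> = (\<integral>\<^sup>+ y. ennreal (hh k 0 y) \<partial>distr M lborel X)"
      by (simp add: D)
    also have "\<dots> = (\<integral>\<^sup>+ \<omega>. ennreal (hh k 0 (X \<omega>)) \<partial>M)"
      by (rule nn_integral_distr) (auto simp: hh_def)
    also have "\<dots> = (\<integral>\<^sup>+ \<omega>. ennreal (X \<omega> ^ k) \<partial>M)"
      by (rule nn_integral_cong) (simp add: hh_def X0)
    finally show ?thesis .
  qed
  have intX: "integrable M (\<lambda>\<omega>. X \<omega> ^ k)" if "k \<le> s + 1" for k
  proof (rule Bochner_Integration.integrable_bound)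
    show "integrable M (\<lambda>\<omega>. 1 + X \<omega> ^ (s + 1))"
      using assms(7) by simp
    show "(\<lambda>\<omega>. X \<omega> ^ k) \<in> borel_measurable M" by measurable
    show "AE \<omega> in M. norm (X \<omega> ^ k) \<le> norm (1 + X \<omega> ^ (s + 1))"
    proof (rule AE_I2)
      fix \<omega> assume w: "\<omega> \<in> space M"
      have x0: "0 \<le> X \<omega>" using X0[OF w] .
      have "X \<omega> ^ k \<le> 1 + X \<omega> ^ (s + 1)"
      proof (cases "X \<omega> \<le> 1")
        case True
        then have "X \<omega> ^ k \<le> 1" using x0 by (simp add: power_le_one)
        then show ?thesis using x0 by (smt (verit) zero_le_power)
      next
        case False
        then have "X \<omega> ^ k \<le> X \<omega> ^ (s + 1)" using that by (intro power_increasing) auto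
        then show ?thesis by simp
      qed
      then show "norm (X \<omega> ^ k) \<le> norm (1 + X \<omega> ^ (s + 1))"
        using x0 by simp
    qed
  qed
  have GGa: "GG f k 0 = ennreal (a k)" if "k \<le> s + 1" for k
    unfolding GG0 a_def
    by (rule nn_integral_eq_integral[OF intX[OF that]]) (auto intro!: AE_I2 simp: X0)
  have a0: "a 0 = 1" unfolding a_def by (simp add: M.prob_space)
  have apos: "a k > 0" if "k \<le> s + 1" for k
  proof (cases k)
    case 0 then show ?thesis using a0 by simp
  next
    case (Suc k')
    have ge: "a k \<ge> 0" unfolding a_def by (intro integral_nonneg_AE AE_I2) (simp add: X0)
    show ?thesis
    proof (rule ccontr)
      assume "\<not> 0 < a k"
      then have "a k = 0" using ge by simp
      then have "(\<integral>\<^sup>+ \<omega>. ennreal (X \<omega> ^ k) \<partial>M) = 0" using GGa[OF that] GG0 by simp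
      then have "AE \<omega> in M. ennreal (X \<omega> ^ k) = 0"
        by (subst nn_integral_0_iff_AE[symmetric]) auto
      then have AE0: "AE \<omega> in M. \<omega> \<in> X -` {0} \<inter> space M"
      proof (rule AE_mp)
        show "AE \<omega> in M. ennreal (X \<omega> ^ k) = 0 \<longrightarrow> \<omega> \<in> X -` {0} \<inter> space M"
        proof (rule AE_I2, intro impI)
          fix \<omega> assume w: "\<omega> \<in> space M" and "ennreal (X \<omega> ^ k) = 0"
          then have "X \<omega> ^ k \<le> 0" using ennreal_eq_0_iff by blast
          with X0[OF w] have "X \<omega> ^ k = 0" by (metis order_antisym zero_le_power)
          then show "\<omega> \<in> X -` {0} \<inter> space M" using w Suc by auto
        qed
      qed
      have "emeasure M (X -` {0} \<inter> space M) = 1"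
        by (rule M.emeasure_eq_1_AE[OF _ AE0]) measurable
      moreover have "emeasure M (X -` {0} \<inter> space M) = emeasure (distr M lborel X) {0}"
        by (rule emeasure_distr[symmetric]) auto
      moreover have "emeasure (distr M lborel X) {0} = 0"
      proof -
        have "emeasure (distr M lborel X) {0} = (\<integral>\<^sup>+ x. ennreal (f x) * indicator {0} x \<partial>lborel)"
          unfolding D by (rule emeasure_density) auto
        also have "\<dots> = (\<integral>\<^sup>+ (x::real). 0 \<partial>lborel)"
        proof (intro nn_integral_cong_AE)
          show "AE x in lborel. ennreal (f x) * indicator {0} x = 0"
            using AE_lborel_singleton[of 0] by eventually_elim simp
        qed
        finally show ?thesis by simp
      qed
      ultimately show False by simp
    qed
  qed
  have GGle: "GG f k x \<le> GG f k 0" if "0 \<le> x" for k x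
    unfolding GG_def
  proof (rule nn_integral_mono)
    fix y
    have "hh k x y \<le> hh k 0 y"
      using that by (auto simp: hh_def intro!: power_mono)
    then show "ennreal (f y * hh k x y) \<le> ennreal (f y * hh k 0 y)"
      by (intro ennreal_leI mult_left_mono f0)
  qed
  have GGfin: "GG f k x < \<top>" if "0 \<le> x" "k \<le> s + 1" for k x
    using GGle[OF that(1), of k] GGa[OF that(2)] by (simp add: le_less_trans)
  define gr where "gr k x = enn2real (GG f k x)" for k x
  have gr_eq: "ennreal (gr k x) = GG f k x" if "0 \<le> x" "k \<le> s + 1" for k x
    unfolding gr_def using GGfin[OF that] by simp
  have gr0: "gr k 0 = a k" if "k \<le> s + 1" for k
    unfolding gr_def using GGa[OF that] apos[OF that] by simp
  have gr_nn: "0 \<le> gr k x" for k x unfolding gr_def by simp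
  have gr_meas[measurable]: "gr k \<in> borel_measurable lborel" for k
    unfolding gr_def[abs_def] by measurable
  have TI: "(LINT t:{x..}|lborel. T t) = gr (Suc j) x / (real (Suc j) * a j)"
    if j: "j \<le> s" and x: "0 \<le> x" and T: "\<And>t. 0 \<le> t \<Longrightarrow> T t = gr j t / a j" for j x T
  proof -
    have aj: "a j > 0" using apos j by simp
    have "(LINT t:{x..}|lborel. T t) = (LINT t:{x..}|lborel. gr j t / a j)"
      by (rule set_lebesgue_integral_cong) (use x T in auto)
    also have "\<dots> = integral\<^sup>L lborel (\<lambda>t. indicator {x..} t * (gr j t / a j))"
      unfolding set_lebesgue_integral_def by simp
    also have "\<dots> = enn2real (\<integral>\<^sup>+ t. ennreal (indicator {x..} t * (gr j t / a j)) \<partial>lborel)"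
      using aj gr_nn by (intro integral_eq_nn_integral) (auto intro!: AE_I2 divide_nonneg_pos)
    also have "(\<integral>\<^sup>+ t. ennreal (indicator {x..} t * (gr j t / a j)) \<partial>lborel)
        = (\<integral>\<^sup>+ t. ennreal (indicator {x..} t) * GG f j t * ennreal (1 / a j) \<partial>lborel)"
    proof (rule nn_integral_cong)
      fix t
      show "ennreal (indicator {x..} t * (gr j t / a j)) = ennreal (indicator {x..} t) * GG f j t * ennreal (1 / a j)"
      proof (cases "x \<le> t")
        case True
        then have "ennreal (gr j t / a j) = ennreal (gr j t) * ennreal (1 / a j)"
          using aj gr_nn by (simp add: ennreal_mult[symmetric])
        then show ?thesis using True x j gr_eq[of t j] by simp
      qed simp
    qed
    also have "\<dots> = (\<integral>\<^sup>+ t. ennreal (indicator {x..} t) * GG f j t \<partial>lborel) * ennreal (1 / a j)"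
      by (rule nn_integral_multc) measurable
    also have "(\<integral>\<^sup>+ t. ennreal (indicator {x..} t) * GG f j t \<partial>lborel)
       = (\<integral>\<^sup>+ y. ennreal (f y) * ennreal (hh (Suc j) x y / real (Suc j)) \<partial>lborel)"
      by (subst swapG) (auto simp: f0 inner1)
    also have "\<dots> = (\<integral>\<^sup>+ y. ennreal (f y * hh (Suc j) x y) * ennreal (1 / real (Suc j)) \<partial>lborel)"
      by (rule nn_integral_cong) (simp add: ennreal_mult[symmetric] f0 hh_nonneg)
    also have "\<dots> = GG f (Suc j) x * ennreal (1 / real (Suc j))"
      unfolding GG_def by (rule nn_integral_multc) measurable
    also have "\<dots> = ennreal (gr (Suc j) x * (1 / real (Suc j)))"
    proof -
      have e: "GG f (Suc j) x = ennreal (gr (Suc j) x)" using gr_eq[of x "Suc j"] x j by simp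
      show ?thesis unfolding e by (rule ennreal_mult[symmetric]) (auto simp: gr_nn)
    qed
    finally show ?thesis
      using aj gr_nn[of "Suc j" x] by (simp add: ennreal_mult[symmetric] enn2real_ennreal)
  qed
  have it_suc: "iter_tail f (Suc j) x = (1 / iter_mean f j) * (LINT t:{x..}|lborel. iter_tail f j t)" for j x
    by (simp add: iter_tail_def iter_mean_def Let_def)
  have im_suc: "iter_mean f (Suc j) = (LINT t:{0..}|lborel. iter_tail f (Suc j) t)" for j
    by (simp add: iter_tail_def iter_mean_def Let_def)
  have it0: "iter_tail f 0 = f" "iter_mean f 0 = 1"
    by (simp_all add: iter_tail_def iter_mean_def)
  have ITER: "Suc j \<le> s \<Longrightarrow> \<forall>x\<ge>0. iter_tail f (Suc j) x = gr j x / a j" for j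
  proof (induction j)
    case 0
    show ?case
    proof (intro allI impI)
      fix x :: real assume x: "0 \<le> x"
      have "iter_tail f (Suc 0) x = (LINT t:{x..}|lborel. f t)"
        by (simp add: it_suc it0)
      also have "\<dots> = integral\<^sup>L lborel (\<lambda>t. indicator {x..} t * f t)"
        unfolding set_lebesgue_integral_def by simp
      also have "\<dots> = enn2real (\<integral>\<^sup>+ t. ennreal (indicator {x..} t * f t) \<partial>lborel)"
        by (rule integral_eq_nn_integral) (auto intro!: AE_I2 simp: f0)
      also have "(\<integral>\<^sup>+ t. ennreal (indicator {x..} t * f t) \<partial>lborel) = GG f 0 x"
        unfolding GG_def by (rule nn_integral_cong) (simp add: hh_def indicator_def)
      finally show "iter_tail f (Suc 0) x = gr 0 x / a 0"
        by (simp add: gr_def a0)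
    qed
  next
    case (Suc j)
    then have IH: "\<And>t. 0 \<le> t \<Longrightarrow> iter_tail f (Suc j) t = gr j t / a j" by simp
    have aj: "a j > 0" "a (Suc j) > 0" using apos Suc.prems by auto
    have m: "iter_mean f (Suc j) = a (Suc j) / (real (Suc j) * a j)"
      unfolding im_suc using TI[of j 0 "iter_tail f (Suc j)"] IH Suc.prems gr0[of "Suc j"] by simp
    show ?case
    proof (intro allI impI)
      fix x :: real assume x: "0 \<le> x"
      have "iter_tail f (Suc (Suc j)) x = (1 / iter_mean f (Suc j)) * (gr (Suc j) x / (real (Suc j) * a j))"
        unfolding it_suc[of "Suc j" x] using TI[of j x "iter_tail f (Suc j)"] IH Suc.prems x by simp
      also have "\<dots> = gr (Suc j) x / a (Suc j)"
      proof -
        have c: "real (Suc j) * a j > 0" using aj by simp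
        have "\<And>c a1 g. (c::real) > 0 \<Longrightarrow> a1 > 0 \<Longrightarrow> 1 / (a1 / c) * (g / c) = g / a1"
          by (simp add: field_simps)
        from this[OF c aj(2)] show ?thesis unfolding m .
      qed
      finally show "iter_tail f (Suc (Suc j)) x = gr (Suc j) x / a (Suc j)" .
    qed
  qed
  interpret N: prob_space N by fact
  have sN[measurable_cong]: "sets N = sets borel" by fact
  obtain j0 where s: "s = Suc j0" using assms(6) by (cases s) auto
  have j0: "s - 1 = j0" using s by simp
  have aj0: "a j0 > 0" "a s > 0" "a (s + 1) > 0" using apos s by auto
  have tailN: "emeasure N {t<..} = GG f j0 t * ennreal (1 / a j0)" if t: "0 \<le> t" for t
  proof -
    have "emeasure N {t<..} = ennreal (iter_tail f s t)"
      using assms(11)[OF t] by (simp add: N.emeasure_eq_measure)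
    also have "\<dots> = ennreal (gr j0 t * (1 / a j0))"
      using ITER[of j0] s t by simp
    also have "\<dots> = ennreal (gr j0 t) * ennreal (1 / a j0)"
      by (rule ennreal_mult) (use aj0 gr_nn in auto)
    also have "\<dots> = GG f j0 t * ennreal (1 / a j0)"
      using gr_eq[OF t, of j0] s by simp
    finally show ?thesis .
  qed
  have AEpos: "AE x in N. 0 \<le> x"
  proof (rule AE_I')
    show "{..<0::real} \<in> null_sets N"
      using assms(10) by (intro null_setsI) (auto simp: N.emeasure_eq_measure)
  qed auto
  have idm[measurable]: "(\<lambda>x::real. x) \<in> borel_measurable N" by measurable
  have E1: "(\<integral>\<^sup>+ x. ennreal x \<partial>N) = ennreal (a s * (1 / real s) * (1 / a j0))"
  proof -
    have "(\<integral>\<^sup>+ x. ennreal x \<partial>N)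
        = (\<integral>\<^sup>+ x. (\<integral>\<^sup>+ t. ennreal (indicator {0..} t * (\<lambda>_. 1) t * (if t < x then 1 else 0)) \<partial>lborel) \<partial>N)"
    proof (rule nn_integral_cong_AE)
      show "AE x in N. ennreal x = (\<integral>\<^sup>+ t. ennreal (indicator {0..} t * (\<lambda>_. 1) t * (if t < x then 1 else 0)) \<partial>lborel)"
        using AEpos
      proof eventually_elim
        case (elim x)
        have "(\<integral>\<^sup>+ t. ennreal (indicator {0..} t * (\<lambda>_. 1) t * (if t < x then 1 else 0)) \<partial>lborel) = ennreal (x - 0)"
          by (rule innerN) (auto intro!: derivative_eq_intros elim)
        then show ?case by simp
      qed
    qed
    also have "\<dots> = (\<integral>\<^sup>+ t. ennreal (indicator {0..} t * (\<lambda>_. 1) t) * emeasure N {t<..} \<partial>lborel)"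
      by (rule swapN) (auto simp: assms(8,9))
    also have "\<dots> = (\<integral>\<^sup>+ t. ennreal (indicator {0..} t) * GG f j0 t * ennreal (1 / a j0) \<partial>lborel)"
      by (rule nn_integral_cong) (auto simp: tailN indicator_def mult.assoc)
    also have "\<dots> = (\<integral>\<^sup>+ t. ennreal (indicator {0..} t) * GG f j0 t \<partial>lborel) * ennreal (1 / a j0)"
      by (rule nn_integral_multc) measurable
    also have "\<dots> = GG f s 0 * ennreal (1 / real s) * ennreal (1 / a j0)"
      using tail1[OF fm f0, of 0 j0] s by simp
    also have "\<dots> = ennreal (a s * (1 / real s) * (1 / a j0))"
      using GGa[of s] by (subst ennreal_mult3[symmetric]) (use aj0 in auto)
    finally show ?thesis .
  qed
  have E2: "(\<integral>\<^sup>+ x. ennreal (x\<^sup>2) \<partial>N) = ennreal (a (s + 1) * (1 / (real s * real (s + 1))) * (2 / a j0))"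
  proof -
    have "(\<integral>\<^sup>+ x. ennreal (x\<^sup>2) \<partial>N)
        = (\<integral>\<^sup>+ x. (\<integral>\<^sup>+ t. ennreal (indicator {0..} t * (2 * t) * (if t < x then 1 else 0)) \<partial>lborel) \<partial>N)"
    proof (rule nn_integral_cong_AE)
      show "AE x in N. ennreal (x\<^sup>2) = (\<integral>\<^sup>+ t. ennreal (indicator {0..} t * (2 * t) * (if t < x then 1 else 0)) \<partial>lborel)"
        using AEpos
      proof eventually_elim
        case (elim x)
        have "(\<integral>\<^sup>+ t. ennreal (indicator {0..} t * (\<lambda>t. 2 * t) t * (if t < x then 1 else 0)) \<partial>lborel) = ennreal ((\<lambda>t. t\<^sup>2) x - (\<lambda>t. t\<^sup>2) 0)"
          by (rule innerN) (auto intro!: derivative_eq_intros elim)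
        then show ?case by simp
      qed
    qed
    also have "\<dots> = (\<integral>\<^sup>+ t. ennreal (indicator {0..} t * (2 * t)) * emeasure N {t<..} \<partial>lborel)"
      by (rule swapN[where q = "\<lambda>t. 2 * t", simplified]) (auto simp: assms(8,9))
    also have "\<dots> = (\<integral>\<^sup>+ t. ennreal (indicator {0..} t * t) * GG f j0 t * ennreal (2 / a j0) \<partial>lborel)"
    proof (rule nn_integral_cong)
      fix t :: real
      show "ennreal (indicator {0..} t * (2 * t)) * emeasure N {t<..} = ennreal (indicator {0..} t * t) * GG f j0 t * ennreal (2 / a j0)"
      proof (cases "0 \<le> t")
        case True
        have "ennreal (2 * t) = ennreal t * ennreal 2" using True by (subst ennreal_mult[symmetric]) (auto simp: mult.commute)
        moreover have "ennreal (2 / a j0) = ennreal 2 * ennreal (1 / a j0)" using aj0 by (subst ennreal_mult[symmetric]) auto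
        ultimately show ?thesis using True by (simp add: tailN mult_ac)
      qed simp
    qed
    also have "\<dots> = (\<integral>\<^sup>+ t. ennreal (indicator {0..} t * t) * GG f j0 t \<partial>lborel) * ennreal (2 / a j0)"
      by (rule nn_integral_multc) measurable
    also have "\<dots> = GG f (s + 1) 0 * ennreal (1 / (real s * real (s + 1))) * ennreal (2 / a j0)"
      using tail2[OF fm f0, of j0] s by simp
    also have "\<dots> = ennreal (a (s + 1) * (1 / (real s * real (s + 1))) * (2 / a j0))"
      using GGa[of "s + 1"] by (subst ennreal_mult3[symmetric]) (use aj0 in auto)
    finally show ?thesis .
  qed
  have int1: "integrable N (\<lambda>x. x)"
    by (rule integrableI_nonneg) (use AEpos E1 in auto)
  have int2: "integrable N (\<lambda>x. x\<^sup>2)"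
    by (rule integrableI_nonneg) (use E2 in auto)
  have I1: "(LINT x|N. x) = a s * (1 / real s) * (1 / a j0)"
    using integral_eq_nn_integral[OF idm AEpos] E1 aj0 by simp
  have I2: "(LINT x|N. x\<^sup>2) = a (s + 1) * (1 / (real s * real (s + 1))) * (2 / a j0)"
    using integral_eq_nn_integral[of "\<lambda>x. x\<^sup>2" N] E2 aj0 by simp
  have V: "prob_space.variance N (\<lambda>x. x) = (LINT x|N. x\<^sup>2) - (LINT x|N. x)\<^sup>2"
    using N.variance_eq[OF int1 int2] .
  have sp: "real s > 0" using s by simp
  show ?thesis
    unfolding V unfolding I1 I2 j0 a_def[symmetric]
    using alg_final[OF aj0 sp, of "real (Suc s)"] by simp
qed

end
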